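(* Let $|\Psi\rangle$ be a normalized state of $N$ qubits given by an open matrix-product state (MPS) in canonical Vidal form $\{\Gamma^{[i]},\Lambda^{[j]}\}$ (as described in the context). Fix a positive integer $\chi'$, and let $|\tilde{\Psi}_{T}\rangle$ be the parallel-compressed MPS obtained by inserting the projector $P_i$ on every bond $i=1,\dots,N-1$. Let $\epsilon(\chi')=\sum_{i=1}^{N-1}\epsilon_i(\chi')$ with $\epsilon_i(\chi')=\sum_{\alpha>\chi'}(\Lambda^{[i]}_{\alpha\alpha})^2$. Then the norm $n=\big\||\tilde{\Psi}_{T}\rangle\big\|$ satisfies $$1-\sqrt{2\epsilon(\chi')}\;\le\; n\;\le\;1.$$
   Context: An open MPS in Vidal form on $N$ sites with local dimension $d$ (here $d=2$) consists of rank-3 tensors $\Gamma^{[i]\sigma_i}$ ($i=1,\dots,N$, $\sigma_i\in\{0,\dots,d-1\}$), each a $\chi_{i-1}\times\chi_i$ matrix for fixed $\sigma_i$, and real diagonal matrices $\Lambda^{[i]}$ of size $\chi_i\times\chi_i$ ($i=0,\dots,N$) with nonnegative diagonal entries in descending order, where $\chi_0=\chi_N=1$ and $\Lambda^{[0]}=\Lambda^{[N]}=(1)$. It represents $|\Psi\rangle=\sum_{\sigma_1,\dots,\sigma_N}\mathrm{Tr}(\Lambda^{[0]}\Gamma^{[1]\sigma_1}\Lambda^{[1]}\Gamma^{[2]\sigma_2}\cdots\Lambda^{[N-1]}\Gamma^{[N]\sigma_N}\Lambda^{[N]})\,|\sigma_1\cdots\sigma_N\rangle$. It is in canonical form if for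 every $i=1,\dots,N$, with $A^{[i]\sigma_i}=\Lambda^{[i-1]}\Gamma^{[i]\sigma_i}$ and $B^{[i]\sigma_i}=\Gamma^{[i]\sigma_i}\Lambda^{[i]}$, one has $\sum_{\sigma_i}(A^{[i]\sigma_i})^\dagger A^{[i]\sigma_i}=I_{\chi_i}$ and $\sum_{\sigma_i}B^{[i]\sigma_i}(B^{[i]\sigma_i})^\dagger=I_{\chi_{i-1}}$. For a normalized canonical MPS, $\sum_\alpha(\Lambda^{[i]}_{\alpha\alpha})^2=1$ for each $i$. For each bond $i\in\{1,\dots,N-1\}$, $P_i=\sum_{\alpha=1}^{\min(\chi',\chi_i)}|\alpha\rangle\langle\alpha|$ is the projector onto the first $\chi'$ standard basis vectors of the $\chi_i$-dimensional bond space (those corresponding to the largest diagonal entries of $\Lambda^{[i]}$). The parallel-compressed state is $|\tilde{\Psi}_{T}\rangle=\sum_{\sigma}\mathrm{Tr}(\Lambda^{[0]}\Gamma^{[1]\sigma_1}P_1\Lambda^{[1]}\Gamma^{[2]\sigma_2}P_2\Lambda^{[2]}\cdots P_{N-1}\Lambda^{[N-1]}\Gamma^{[N]\sigma_N}\Lambda^{[N]})|\sigma_1\cdots\sigma_N\rangle$ (not renormalized). Sums $\sum_{\alpha>\chi'}$ over an empty range are zero. *)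

theory Defs
  imports Complex_Main "Jordan_Normal_Form.Matrix"
begin

definition dag :: "complex mat \<Rightarrow> complex mat" where
  "dag A = mat (dim_col A) (dim_row A) (\<lambda>(i,j). cnj (A $$ (j,i)))"

definition mtrace :: "complex mat \<Rightarrow> complex" where
  "mtrace A = (\<Sum>i<dim_row A. A $$ (i,i))"

definition lam_mat :: "(nat \<Rightarrow> nat) \<Rightarrow> (nat \<Rightarrow> nat \<Rightarrow> real) \<Rightarrow> nat \<Rightarrow> complex mat" where
  "lam_mat chi Lam i = mat (chi i) (chi i) (\<lambda>(a,b). if a = b then complex_of_real (Lam i a) else 0)"

definition proj_mat :: "(nat \<Rightarrow> nat) \<Rightarrow> nat \<Rightarrow> nat \<Rightarrow> complex mat" where
  "proj_mat chi chi' i = mat (chi i) (chi i) (\<lambda>(a,b). if a = b \<and> a < chi' then 1 else 0)"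

definition configs :: "nat \<Rightarrow> (nat \<Rightarrow> nat) set" where
  "configs N = PiE {1..N} (\<lambda>_. {..<2})"

definition vidal_mps ::
  "nat \<Rightarrow> (nat \<Rightarrow> nat) \<Rightarrow> (nat \<Rightarrow> nat \<Rightarrow> complex mat) \<Rightarrow> (nat \<Rightarrow> nat \<Rightarrow> real) \<Rightarrow> bool" where
  "vidal_mps N chi Gamma Lam \<longleftrightarrow>
     chi 0 = 1 \<and> chi N = 1 \<and> (\<forall>i\<le>N. chi i \<ge> 1) \<and>
     Lam 0 0 = 1 \<and> Lam N 0 = 1 \<and>
     (\<forall>i\<in>{1..N}. \<forall>s<2. Gamma i s \<in> carrier_mat (chi (i - 1)) (chi i)) \<and>
     (\<forall>i\<le>N. \<forall>a<chi i. Lam i a \<ge> 0) \<and>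
     (\<forall>i\<le>N. \<forall>a b. a \<le> b \<longrightarrow> b < chi i \<longrightarrow> Lam i b \<le> Lam i a)"

definition canonical ::
  "nat \<Rightarrow> (nat \<Rightarrow> nat) \<Rightarrow> (nat \<Rightarrow> nat \<Rightarrow> complex mat) \<Rightarrow> (nat \<Rightarrow> nat \<Rightarrow> real) \<Rightarrow> bool" where
  "canonical N chi Gamma Lam \<longleftrightarrow>
     (\<forall>i\<in>{1..N}.
        (let A = (\<lambda>s. lam_mat chi Lam (i - 1) * Gamma i s);
             B = (\<lambda>s. Gamma i s * lam_mat chi Lam i)
         in dag (A 0) * A 0 + dag (A 1) * A 1 = 1\<^sub>m (chi i) \<and>
            B 0 * dag (B 0) + B 1 * dag (B 1) = 1\<^sub>m (chi (i - 1))))"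

text \<open>Amplitude of the MPS:
  Tr(Lambda0 Gamma1 Lambda1 Gamma2 ... Lambda_(N-1) Gamma_N Lambda_N).\<close>
definition mps_amp ::
  "nat \<Rightarrow> (nat \<Rightarrow> nat) \<Rightarrow> (nat \<Rightarrow> nat \<Rightarrow> complex mat) \<Rightarrow> (nat \<Rightarrow> nat \<Rightarrow> real)
   \<Rightarrow> (nat \<Rightarrow> nat) \<Rightarrow> complex" where
  "mps_amp N chi Gamma Lam \<sigma> =
     mtrace (foldl (*) (1\<^sub>m 1) (map (\<lambda>i. lam_mat chi Lam (i - 1) * Gamma i (\<sigma> i)) [1..<N+1])
             * lam_mat chi Lam N)"

text \<open>Amplitude of the parallel-compressed MPS:
  Tr(Lambda0 Gamma1 P1 Lambda1 Gamma2 P2 Lambda2 ... P_(N-1) Lambda_(N-1) Gamma_N Lambda_N).\<close>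
definition comp_amp ::
  "nat \<Rightarrow> (nat \<Rightarrow> nat) \<Rightarrow> (nat \<Rightarrow> nat \<Rightarrow> complex mat) \<Rightarrow> (nat \<Rightarrow> nat \<Rightarrow> real) \<Rightarrow> nat
   \<Rightarrow> (nat \<Rightarrow> nat) \<Rightarrow> complex" where
  "comp_amp N chi Gamma Lam chi' \<sigma> =
     mtrace (foldl (*) (1\<^sub>m 1)
               (map (\<lambda>i. (if i = 1 then 1\<^sub>m (chi 0) else proj_mat chi chi' (i - 1))
                          * lam_mat chi Lam (i - 1) * Gamma i (\<sigma> i)) [1..<N+1])
             * lam_mat chi Lam N)"

definition state_norm :: "nat \<Rightarrow> ((nat \<Rightarrow> nat) \<Rightarrow> complex) \<Rightarrow> real" where
  "state_norm N psi = sqrt (\<Sum>\<sigma>\<in>configs N. (cmod (psi \<sigma>))\<^sup>2)"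

text \<open>Truncation error on bond i: sum of squared discarded Schmidt values (0-based: a \<ge> chi').\<close>
definition eps_bond :: "(nat \<Rightarrow> nat) \<Rightarrow> (nat \<Rightarrow> nat \<Rightarrow> real) \<Rightarrow> nat \<Rightarrow> nat \<Rightarrow> real" where
  "eps_bond chi Lam chi' i = (\<Sum>a\<in>{chi'..<chi i}. (Lam i a)\<^sup>2)"

definition eps_total :: "nat \<Rightarrow> (nat \<Rightarrow> nat) \<Rightarrow> (nat \<Rightarrow> nat \<Rightarrow> real) \<Rightarrow> nat \<Rightarrow> real" where
  "eps_total N chi Lam chi' = (\<Sum>i\<in>{1..<N}. eps_bond chi Lam chi' i)"

end

theory Submission imports Defs begin

lemma swap5: "(\<Sum>b\<in>B. \<Sum>d\<in>D. \<Sum>s\<in>S. \<Sum>a\<in>A. \<Sum>e\<in>E. F b d s a e) = (\<Sum>s\<in>S. \<Sum>a\<in>A. \<Sum>e\<in>E. \<Sum>b\<in>B. \<Sum>d\<in>D. F b d s a e)"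
proof -
  have "(\<Sum>b\<in>B. \<Sum>d\<in>D. \<Sum>s\<in>S. \<Sum>a\<in>A. \<Sum>e\<in>E. F b d s a e) = (\<Sum>b\<in>B. \<Sum>s\<in>S. \<Sum>a\<in>A. \<Sum>e\<in>E. \<Sum>d\<in>D. F b d s a e)"
    by (intro sum.cong refl, subst sum.swap, intro sum.cong refl, subst sum.swap, intro sum.cong refl, subst sum.swap, rule refl)
  also have "\<dots> = (\<Sum>s\<in>S. \<Sum>a\<in>A. \<Sum>e\<in>E. \<Sum>b\<in>B. \<Sum>d\<in>D. F b d s a e)"
    by (subst sum.swap, intro sum.cong refl, subst sum.swap, intro sum.cong refl, subst sum.swap, rule refl)
  finally show ?thesis .
qed

definition psd :: "nat \<Rightarrow> (nat \<Rightarrow> nat \<Rightarrow> complex) \<Rightarrow> bool" where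
  "psd n X \<longleftrightarrow> (\<forall>v. 0 \<le> Re (\<Sum>a<n. \<Sum>c<n. cnj (v a) * X a c * v c))"

lemma psd_diag: assumes "psd n X" "a < n" shows "0 \<le> Re (X a a)"
proof -
  define v :: "nat \<Rightarrow> complex" where "v = (\<lambda>x. if x = a then 1 else 0)"
  have inner: "(\<Sum>c<n. cnj (v a') * X a' c * v c) = (if a' = a then X a' a else 0)" for a'
  proof -
    have "(\<Sum>c<n. cnj (v a') * X a' c * v c) = (\<Sum>c<n. if c = a then cnj (v a') * X a' a else 0)"
      by (rule sum.cong[OF refl]) (simp add: v_def)
    also have "\<dots> = cnj (v a') * X a' a" using assms(2) by simp
    finally show ?thesis by (simp add: v_def)
  qed
  have "(\<Sum>a'<n. \<Sum>c<n. cnj (v a') * X a' c * v c) = X a a"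
    unfolding inner using assms(2) by simp
  moreover have "0 \<le> Re (\<Sum>a'<n. \<Sum>c<n. cnj (v a') * X a' c * v c)"
    using assms(1) unfolding psd_def by (rule allE)
  ultimately show ?thesis by simp
qed

lemma swap4: "(\<Sum>b\<in>B. \<Sum>s\<in>S. \<Sum>a\<in>A. \<Sum>e\<in>E. F b s a e) = (\<Sum>a\<in>A. \<Sum>e\<in>E. \<Sum>s\<in>S. \<Sum>b\<in>B. F b s a e)"
proof -
  have "(\<Sum>b\<in>B. \<Sum>s\<in>S. \<Sum>a\<in>A. \<Sum>e\<in>E. F b s a e) = (\<Sum>s\<in>S. \<Sum>b\<in>B. \<Sum>a\<in>A. \<Sum>e\<in>E. F b s a e)"
    by (rule sum.swap)
  also have "\<dots> = (\<Sum>s\<in>S. \<Sum>a\<in>A. \<Sum>e\<in>E. \<Sum>b\<in>B. F b s a e)"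
    by (rule sum.cong[OF refl], subst sum.swap, rule sum.cong[OF refl], rule sum.swap)
  also have "\<dots> = (\<Sum>a\<in>A. \<Sum>s\<in>S. \<Sum>e\<in>E. \<Sum>b\<in>B. F b s a e)"
    by (rule sum.swap)
  also have "\<dots> = (\<Sum>a\<in>A. \<Sum>e\<in>E. \<Sum>s\<in>S. \<Sum>b\<in>B. F b s a e)"
    by (rule sum.cong[OF refl], rule sum.swap)
  finally show ?thesis .
qed
lemma swap3: "(\<Sum>s\<in>S. \<Sum>a\<in>A. \<Sum>e\<in>E. F s a e) = (\<Sum>a\<in>A. \<Sum>e\<in>E. \<Sum>s\<in>S. F s a e)"
proof -
  have "(\<Sum>s\<in>S. \<Sum>a\<in>A. \<Sum>e\<in>E. F s a e) = (\<Sum>a\<in>A. \<Sum>s\<in>S. \<Sum>e\<in>E. F s a e)" by (rule sum.swap)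
  also have "\<dots> = (\<Sum>a\<in>A. \<Sum>e\<in>E. \<Sum>s\<in>S. F s a e)" by (rule sum.cong[OF refl], rule sum.swap)
  finally show ?thesis .
qed
lemma swapin: "(\<Sum>s\<in>S. \<Sum>a\<in>A. \<Sum>e\<in>E. \<Sum>b\<in>B. \<Sum>d\<in>D. G s a e b d) = (\<Sum>s\<in>S. \<Sum>a\<in>A. \<Sum>e\<in>E. \<Sum>d\<in>D. \<Sum>b\<in>B. G s a e b d)"
  by (rule sum.cong[OF refl], rule sum.cong[OF refl], rule sum.cong[OF refl], rule sum.swap)

lemma configs_Suc:
  "(\<Sum>\<sigma>\<in>configs (Suc k). f \<sigma>) = (\<Sum>s<2. \<Sum>\<sigma>\<in>configs k. f (\<sigma>(Suc k := s)))"
proof -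
  have e: "{1..Suc k} = insert (Suc k) {1..k}" by auto
  have nin: "Suc k \<notin> {1..k}" by auto
  have "configs (Suc k) = (\<lambda>(y, g). g(Suc k := y)) ` ({..<2::nat} \<times> configs k)"
    unfolding configs_def e by (simp add: PiE_insert_eq)
  then have "(\<Sum>\<sigma>\<in>configs (Suc k). f \<sigma>) = (\<Sum>p\<in>{..<2::nat} \<times> configs k. f ((\<lambda>(y, g). g(Suc k := y)) p))"
    using sum.reindex[OF inj_combinator[OF nin, of "\<lambda>_. {..<2::nat}"], of f]
    by (simp add: configs_def o_def)
  also have "\<dots> = (\<Sum>s<2. \<Sum>\<sigma>\<in>configs k. f (\<sigma>(Suc k := s)))"
    by (simp add: sum.cartesian_product case_prod_unfold)
  finally show ?thesis .
qed

lemma configs_0: "configs 0 = {\<lambda>_. undefined}"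
  unfolding configs_def by simp

lemma finite_configs: "finite (configs k)"
  unfolding configs_def by (intro finite_PiE) auto

lemma mult_entry:
  assumes "A \<in> carrier_mat n m" "B \<in> carrier_mat m p" "i < n" "j < p"
  shows "(A * B) $$ (i,j) = (\<Sum>k<m. A $$ (i,k) * B $$ (k,j))"
  using assms by (simp add: index_mult_mat scalar_prod_def atLeast0LessThan)

lemma diag_mult_left:
  assumes "D \<in> carrier_mat n n" "\<And>a a'. a < n \<Longrightarrow> a' < n \<Longrightarrow> D $$ (a,a') = (if a = a' then f a else 0)"
    "G \<in> carrier_mat n m" "a < n" "b < m"
  shows "(D * G) $$ (a,b) = f a * G $$ (a,b)"
proof -
  have "(D * G) $$ (a,b) = (\<Sum>k<n. D $$ (a,k) * G $$ (k,b))" using assms by (intro mult_entry) auto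
  also have "\<dots> = (\<Sum>k<n. if k = a then f a * G $$ (a,b) else 0)"
    by (rule sum.cong[OF refl]) (use assms in auto)
  also have "\<dots> = f a * G $$ (a,b)" using assms by simp
  finally show ?thesis .
qed

lemma diag_mult_right:
  assumes "D \<in> carrier_mat m m" "\<And>b b'. b < m \<Longrightarrow> b' < m \<Longrightarrow> D $$ (b,b') = (if b = b' then f b else 0)"
    "G \<in> carrier_mat n m" "a < n" "b < m"
  shows "(G * D) $$ (a,b) = G $$ (a,b) * f b"
proof -
  have "(G * D) $$ (a,b) = (\<Sum>k<m. G $$ (a,k) * D $$ (k,b))" using assms by (intro mult_entry) auto
  also have "\<dots> = (\<Sum>k<m. if k = b then G $$ (a,b) * f b else 0)"
    by (rule sum.cong[OF refl]) (use assms in auto)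
  also have "\<dots> = G $$ (a,b) * f b" using assms by simp
  finally show ?thesis .
qed

lemma lam_carrier: "lam_mat chi Lam i \<in> carrier_mat (chi i) (chi i)"
  unfolding lam_mat_def by simp
lemma lam_entry: "a < chi i \<Longrightarrow> a' < chi i \<Longrightarrow> lam_mat chi Lam i $$ (a,a') = (if a = a' then complex_of_real (Lam i a) else 0)"
  unfolding lam_mat_def by simp
lemma proj_carrier: "proj_mat chi chi' i \<in> carrier_mat (chi i) (chi i)"
  unfolding proj_mat_def by simp
lemma proj_entry: "a < chi i \<Longrightarrow> a' < chi i \<Longrightarrow> proj_mat chi chi' i $$ (a,a') = (if a = a' then (if a < chi' then 1 else 0) else 0)"
  unfolding proj_mat_def by simp
lemma one_entry: "a < n \<Longrightarrow> a' < n \<Longrightarrow> (1\<^sub>m n :: complex mat) $$ (a,a') = (if a = a' then 1 else 0)"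
  by simp

lemma dag_carrier: "A \<in> carrier_mat n m \<Longrightarrow> dag A \<in> carrier_mat m n"
  unfolding dag_def by simp

lemma dagA_A: assumes "A \<in> carrier_mat n m" "b < m" "d < m"
  shows "(dag A * A) $$ (b,d) = (\<Sum>a<n. cnj (A $$ (a,b)) * A $$ (a,d))"
  using assms by (subst mult_entry[OF dag_carrier[OF assms(1)] assms(1)]) (auto simp: dag_def)

lemma A_dagA: assumes "A \<in> carrier_mat n m" "a < n" "c < n"
  shows "(A * dag A) $$ (a,c) = (\<Sum>b<m. A $$ (a,b) * cnj (A $$ (c,b)))"
  using assms by (subst mult_entry[OF assms(1) dag_carrier[OF assms(1)]]) (auto simp: dag_def)

lemma mtrace_11: assumes "M \<in> carrier_mat 1 1" "L \<in> carrier_mat 1 1"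
  shows "mtrace (M * L) = M $$ (0,0) * L $$ (0,0)"
proof -
  have "(M * L) $$ (0,0) = (\<Sum>k<1. M $$ (0,k) * L $$ (k,0))" by (rule mult_entry[OF assms]) auto
  then show ?thesis using assms unfolding mtrace_def by simp
qed

lemma sum2: "(\<Sum>s<2. f s) = f 0 + f (1::nat)"
  by (simp add: eval_nat_numeral)

lemma lcan_of:
  assumes v: "vidal_mps N chi Gamma Lam" and c: "canonical N chi Gamma Lam"
    and i: "i \<in> {1..N}" and b: "b < chi i" and d: "d < chi i"
  shows "(\<Sum>s<2. \<Sum>a<chi (i-1). complex_of_real ((Lam (i-1) a)^2) * (cnj (Gamma i s $$ (a,b)) * Gamma i s $$ (a,d)))
       = (if b = d then 1 else 0)"
proof -
  define A where "A s = lam_mat chi Lam (i - 1) * Gamma i s" for s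
  have G: "Gamma i s \<in> carrier_mat (chi (i-1)) (chi i)" if "s < 2" for s using v i that unfolding vidal_mps_def by auto
  have AC: "A s \<in> carrier_mat (chi (i-1)) (chi i)" if "s < 2" for s
    unfolding A_def using G[OF that] lam_carrier by (metis mult_carrier_mat)
  have Ae: "A s $$ (a,b') = complex_of_real (Lam (i-1) a) * Gamma i s $$ (a,b')" if "s < 2" "a < chi (i-1)" "b' < chi i" for s a b'
    unfolding A_def by (rule diag_mult_left[where f="\<lambda>a. complex_of_real (Lam (i-1) a)"]) (use lam_carrier lam_entry G that in auto)
  have eq: "dag (A 0) * A 0 + dag (A 1) * A 1 = 1\<^sub>m (chi i)"
    using c i unfolding canonical_def A_def Let_def by auto
  have "(dag (A 0) * A 0 + dag (A 1) * A 1) $$ (b,d) = (dag (A 0) * A 0) $$ (b,d) + (dag (A 1) * A 1) $$ (b,d)"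
    using AC[of 1] dag_carrier[OF AC[of 1]] b d by (simp add: index_add_mat)
  also have "\<dots> = (\<Sum>s<2. (dag (A s) * A s) $$ (b,d))" by (simp add: sum2)
  also have "\<dots> = (\<Sum>s<2. \<Sum>a<chi (i-1). cnj (A s $$ (a,b)) * A s $$ (a,d))"
    by (rule sum.cong[OF refl]) (rule dagA_A[OF AC b d], simp)
  also have "\<dots> = (\<Sum>s<2. \<Sum>a<chi (i-1). complex_of_real ((Lam (i-1) a)^2) * (cnj (Gamma i s $$ (a,b)) * Gamma i s $$ (a,d)))"
    by (intro sum.cong refl) (simp add: Ae b d power2_eq_square)
  finally show ?thesis using eq b d by simp
qed

lemma rcan_of:
  assumes v: "vidal_mps N chi Gamma Lam" and c: "canonical N chi Gamma Lam"
    and i: "i \<in> {1..N}" and a: "a < chi (i-1)" and cc: "c < chi (i-1)"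
  shows "(\<Sum>s<2. \<Sum>b<chi i. complex_of_real ((Lam i b)^2) * (Gamma i s $$ (a,b) * cnj (Gamma i s $$ (c,b))))
       = (if a = c then 1 else 0)"
proof -
  define B where "B s = Gamma i s * lam_mat chi Lam i" for s
  have G: "Gamma i s \<in> carrier_mat (chi (i-1)) (chi i)" if "s < 2" for s using v i that unfolding vidal_mps_def by auto
  have BC: "B s \<in> carrier_mat (chi (i-1)) (chi i)" if "s < 2" for s
    unfolding B_def using G[OF that] lam_carrier by (metis mult_carrier_mat)
  have Be: "B s $$ (a',b) = Gamma i s $$ (a',b) * complex_of_real (Lam i b)" if "s < 2" "a' < chi (i-1)" "b < chi i" for s a' b
    unfolding B_def by (rule diag_mult_right[where f="\<lambda>a. complex_of_real (Lam i a)"]) (use lam_carrier lam_entry G that in auto)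
  have eq: "B 0 * dag (B 0) + B 1 * dag (B 1) = 1\<^sub>m (chi (i-1))"
    using c i unfolding canonical_def B_def Let_def by auto
  have "(B 0 * dag (B 0) + B 1 * dag (B 1)) $$ (a,c) = (B 0 * dag (B 0)) $$ (a,c) + (B 1 * dag (B 1)) $$ (a,c)"
    using BC[of 1] dag_carrier[OF BC[of 1]] a cc by (simp add: index_add_mat)
  also have "\<dots> = (\<Sum>s<2. (B s * dag (B s)) $$ (a,c))" by (simp add: sum2)
  also have "\<dots> = (\<Sum>s<2. \<Sum>b<chi i. B s $$ (a,b) * cnj (B s $$ (c,b)))"
    by (rule sum.cong[OF refl]) (rule A_dagA[OF BC a cc], simp)
  also have "\<dots> = (\<Sum>s<2. \<Sum>b<chi i. complex_of_real ((Lam i b)^2) * (Gamma i s $$ (a,b) * cnj (Gamma i s $$ (c,b))))"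
  proof (intro sum.cong refl)
    fix s b assume sb: "s \<in> {..<2::nat}" "b \<in> {..<chi i}"
    show "B s $$ (a,b) * cnj (B s $$ (c,b)) = complex_of_real ((Lam i b)^2) * (Gamma i s $$ (a,b) * cnj (Gamma i s $$ (c,b)))"
      using Be[of s a b] Be[of s c b] sb a cc by (simp add: power2_eq_square mult_ac)
  qed
  finally show ?thesis using eq a cc by simp
qed


lemma final_real:
  fixes x e :: real
  assumes "1 - e \<le> x" "0 \<le> x" "x \<le> 1" "0 \<le> e"
  shows "1 - sqrt (2 * e) \<le> sqrt x \<and> sqrt x \<le> 1"
proof
  show "sqrt x \<le> 1" using assms by simp
  show "1 - sqrt (2 * e) \<le> sqrt x"
  proof (cases "e \<ge> 1/2")
    case True
    then have "1 \<le> sqrt (2 * e)" by (simp add: real_le_rsqrt)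
    moreover have "0 \<le> sqrt x" using assms by simp
    ultimately show ?thesis by linarith
  next
    case False
    have s1: "sqrt x \<le> 1" using assms by simp
    have "x = sqrt x * sqrt x" using assms by simp
    also have "\<dots> \<le> sqrt x * 1" using s1 assms(2) by (intro mult_left_mono) auto
    finally have xs: "x \<le> sqrt x" by simp
    have "e * e \<le> e * 2" using False assms by (intro mult_left_mono) auto
    then have "e^2 \<le> 2 * e" by (simp add: power2_eq_square mult.commute)
    then have "e \<le> sqrt (2 * e)" by (rule real_le_rsqrt)
    then show ?thesis using xs assms by linarith
  qed
qed

locale mpsL =
  fixes N chi' :: nat and chi :: "nat \<Rightarrow> nat"
    and Gamma :: "nat \<Rightarrow> nat \<Rightarrow> complex mat" and Lam :: "nat \<Rightarrow> nat \<Rightarrow> real"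
  assumes N1: "N \<ge> 1" and chi0: "chi 0 = 1" and chiN: "chi N = 1" and LamN: "Lam N 0 = 1" and Lam0: "Lam 0 0 = 1"
  and rcan: "\<And>i a c. i \<in> {1..N} \<Longrightarrow> a < chi (i-1) \<Longrightarrow> c < chi (i-1) \<Longrightarrow>
     (\<Sum>s<2. \<Sum>b<chi i. complex_of_real ((Lam i b)^2) * (Gamma i s $$ (a,b) * cnj (Gamma i s $$ (c,b))))
       = (if a = c then 1 else 0)"
  and carr: "\<And>i s. i \<in> {1..N} \<Longrightarrow> s < 2 \<Longrightarrow> Gamma i s \<in> carrier_mat (chi (i-1)) (chi i)"
  and lcan: "\<And>i b d. i \<in> {1..N} \<Longrightarrow> b < chi i \<Longrightarrow> d < chi i \<Longrightarrow>
     (\<Sum>s<2. \<Sum>a<chi (i-1). complex_of_real ((Lam (i-1) a)^2) * (cnj (Gamma i s $$ (a,b)) * Gamma i s $$ (a,d)))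
       = (if b = d then 1 else 0)"
begin

definition TrC :: "(nat \<Rightarrow> real) \<Rightarrow> nat \<Rightarrow> (nat \<Rightarrow> nat \<Rightarrow> complex) \<Rightarrow> nat \<Rightarrow> nat \<Rightarrow> complex" where
  "TrC c i X b d = (\<Sum>s<2. \<Sum>a<chi (i-1). \<Sum>e<chi (i-1).
      cnj (complex_of_real (c a) * Gamma i s $$ (a,b)) * X a e * (complex_of_real (c e) * Gamma i s $$ (e,d)))"

lemma TrC_psd:
  assumes "psd (chi (i-1)) X" shows "psd (chi i) (TrC c i X)"
  unfolding psd_def
proof
  fix v
  define w where "w s a = (\<Sum>b<chi i. complex_of_real (c a) * Gamma i s $$ (a,b) * v b)" for s a
  define F where "F b d s a e = cnj (v b) * (cnj (complex_of_real (c a) * Gamma i s $$ (a,b)) * X a e * (complex_of_real (c e) * Gamma i s $$ (e,d))) * v d" for b d s a e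
  have "(\<Sum>b<chi i. \<Sum>d<chi i. cnj (v b) * TrC c i X b d * v d)
      = (\<Sum>b<chi i. \<Sum>d<chi i. \<Sum>s<2. \<Sum>a<chi (i-1). \<Sum>e<chi (i-1). F b d s a e)"
    unfolding TrC_def F_def by (simp only: sum_distrib_left sum_distrib_right)
  also have "\<dots> = (\<Sum>s<2. \<Sum>a<chi (i-1). \<Sum>e<chi (i-1). \<Sum>b<chi i. \<Sum>d<chi i. F b d s a e)"
    by (rule swap5)
  also have "\<dots> = (\<Sum>s<2. \<Sum>a<chi (i-1). \<Sum>e<chi (i-1). \<Sum>b<chi i. \<Sum>d<chi i.
      cnj (complex_of_real (c a) * Gamma i s $$ (a,b) * v b) * X a e * (complex_of_real (c e) * Gamma i s $$ (e,d) * v d))"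
    unfolding F_def by (intro sum.cong refl) (simp only: complex_cnj_mult mult_ac)
  also have "\<dots> = (\<Sum>s<2. \<Sum>a<chi (i-1). \<Sum>e<chi (i-1). cnj (w s a) * X a e * w s e)"
    unfolding w_def by (simp only: cnj_sum sum_distrib_left sum_distrib_right) (rule swapin)
  finally have eq: "(\<Sum>b<chi i. \<Sum>d<chi i. cnj (v b) * TrC c i X b d * v d) = (\<Sum>s<2. \<Sum>a<chi (i-1). \<Sum>e<chi (i-1). cnj (w s a) * X a e * w s e)" .
  define Q where "Q s = (\<Sum>a<chi (i-1). \<Sum>e<chi (i-1). cnj (w s a) * X a e * w s e)" for s
  have pX: "\<forall>v. 0 \<le> Re (\<Sum>a<chi (i-1). \<Sum>e<chi (i-1). cnj (v a) * X a e * v e)"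
    using assms unfolding psd_def .
  have q: "0 \<le> Re (Q s)" for s unfolding Q_def by (rule pX[rule_format])
  have "0 \<le> (\<Sum>s<2. Re (Q s))" by (rule sum_nonneg) (rule q)
  also have "\<dots> = Re (\<Sum>s<2. Q s)" by (rule Re_sum[symmetric])
  also have "(\<Sum>s<2. Q s) = (\<Sum>b<chi i. \<Sum>d<chi i. cnj (v b) * TrC c i X b d * v d)"
    unfolding Q_def eq ..
  finally show "0 \<le> Re (\<Sum>b<chi i. \<Sum>d<chi i. cnj (v b) * TrC c i X b d * v d)" .
qed

lemma TrC_trace:
  assumes i: "i \<in> {1..N}"
  shows "(\<Sum>b<chi i. complex_of_real ((Lam i b)^2) * TrC c i X b b)
       = (\<Sum>a<chi (i-1). complex_of_real ((c a)^2) * X a a)"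
proof -
  define H where "H b s a e = complex_of_real ((Lam i b)^2) * (cnj (complex_of_real (c a) * Gamma i s $$ (a,b)) * X a e * (complex_of_real (c e) * Gamma i s $$ (e,b)))" for b s a e
  have "(\<Sum>b<chi i. complex_of_real ((Lam i b)^2) * TrC c i X b b)
      = (\<Sum>b<chi i. \<Sum>s<2. \<Sum>a<chi (i-1). \<Sum>e<chi (i-1). H b s a e)"
    unfolding TrC_def H_def by (simp add: sum_distrib_left)
  also have "\<dots> = (\<Sum>a<chi (i-1). \<Sum>e<chi (i-1). \<Sum>s<2. \<Sum>b<chi i. H b s a e)"
    by (rule swap4)
  also have "\<dots> = (\<Sum>a<chi (i-1). \<Sum>e<chi (i-1). (complex_of_real (c a) * complex_of_real (c e) * X a e) *
        (\<Sum>s<2. \<Sum>b<chi i. complex_of_real ((Lam i b)^2) * (Gamma i s $$ (e,b) * cnj (Gamma i s $$ (a,b)))))"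
    unfolding H_def by (simp add: sum_distrib_left mult_ac)
  also have "\<dots> = (\<Sum>a<chi (i-1). \<Sum>e<chi (i-1). (complex_of_real (c a) * complex_of_real (c e) * X a e) *
        (if e = a then 1 else 0))"
  proof (intro sum.cong refl)
    fix a e assume "a \<in> {..<chi (i-1)}" "e \<in> {..<chi (i-1)}"
    then have "(\<Sum>s<2. \<Sum>b<chi i. complex_of_real ((Lam i b)^2) * (Gamma i s $$ (e,b) * cnj (Gamma i s $$ (a,b)))) = (if e = a then 1 else 0)"
      by (intro rcan[OF i]) auto
    then show "complex_of_real (c a) * complex_of_real (c e) * X a e *
        (\<Sum>s<2. \<Sum>b<chi i. complex_of_real ((Lam i b)^2) * (Gamma i s $$ (e,b) * cnj (Gamma i s $$ (a,b))))
       = complex_of_real (c a) * complex_of_real (c e) * X a e * (if e = a then 1 else 0)" by simp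
  qed
  also have "\<dots> = (\<Sum>a<chi (i-1). complex_of_real ((c a)^2) * X a a)"
  proof (intro sum.cong refl)
    fix a assume "a \<in> {..<chi (i-1)}"
    have h: "\<And>e. complex_of_real (c a) * complex_of_real (c e) * X a e * (if e = a then 1 else 0)
       = (if e = a then complex_of_real ((c a)^2) * X a a else 0)" by (simp add: power2_eq_square)
    show "(\<Sum>e<chi (i-1). complex_of_real (c a) * complex_of_real (c e) * X a e * (if e = a then 1 else 0)) =
         complex_of_real ((c a)^2) * X a a" using \<open>a \<in> _\<close> by (simp add: h)
  qed
  finally show ?thesis .
qed

lemma TrC_cong:
  assumes "\<And>a e. a < chi (i-1) \<Longrightarrow> e < chi (i-1) \<Longrightarrow> X a e = Y a e"
  shows "TrC c i X = TrC c i Y"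
  unfolding TrC_def using assms by (intro ext sum.cong refl) auto

lemma TrC_diff: "TrC c i (X - Y) = TrC c i X - TrC c i Y"
  unfolding TrC_def by (intro ext) (simp add: sum_subtractf[symmetric] ring_distribs)

lemma TrC_Id: "TrC c i (\<lambda>a e. if a = e then 1 else 0) b d =
   (\<Sum>s<2. \<Sum>a<chi (i-1). complex_of_real ((c a)^2) * (cnj (Gamma i s $$ (a,b)) * Gamma i s $$ (a,d)))"
  unfolding TrC_def
proof (intro sum.cong refl)
  fix s a assume "a \<in> {..<chi (i-1)}"
  have h: "\<And>e. cnj (complex_of_real (c a) * Gamma i s $$ (a, b)) * (if a = e then 1 else 0) *
           (complex_of_real (c e) * Gamma i s $$ (e, d)) = (if e = a then complex_of_real ((c a)^2) * (cnj (Gamma i s $$ (a,b)) * Gamma i s $$ (a,d)) else 0)"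
    by (simp add: power2_eq_square mult_ac)
  show "(\<Sum>e<chi (i - 1). cnj (complex_of_real (c a) * Gamma i s $$ (a, b)) * (if a = e then 1 else 0) *
           (complex_of_real (c e) * Gamma i s $$ (e, d))) =
         complex_of_real ((c a)\<^sup>2) * (cnj (Gamma i s $$ (a, b)) * Gamma i s $$ (a, d))"
    using \<open>a \<in> _\<close> by (subst sum.cong[OF refl h]) simp_all
qed

definition cf :: "nat \<Rightarrow> nat \<Rightarrow> nat \<Rightarrow> real" where
  "cf j i a = (if j \<le> i - 1 \<and> chi' \<le> a then 0 else 1) * Lam (i-1) a"

definition chain :: "nat \<Rightarrow> nat \<Rightarrow> (nat \<Rightarrow> nat \<Rightarrow> complex) \<Rightarrow> nat \<Rightarrow> nat \<Rightarrow> complex" where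
  "chain j m X = foldl (\<lambda>Y i. TrC (cf j i) i Y) X [Suc m..<Suc N]"

lemma chain_N: "chain j N X = X"
  unfolding chain_def by simp

lemma chain_step: "m < N \<Longrightarrow> chain j m X = chain j (Suc m) (TrC (cf j (Suc m)) (Suc m) X)"
  unfolding chain_def by (simp add: upt_conv_Cons del: upt_Suc)

lemma chain_cong:
  assumes "m \<le> N" "\<And>a e. a < chi m \<Longrightarrow> e < chi m \<Longrightarrow> X a e = Y a e"
  shows "chain j m X 0 0 = chain j m Y 0 0"
proof (cases "m = N")
  case True
  then show ?thesis using assms(2)[of 0 0] chiN by (simp add: chain_N)
next
  case False
  then have "m < N" using assms(1) by simp
  have "TrC (cf j (Suc m)) (Suc m) X = TrC (cf j (Suc m)) (Suc m) Y"
    by (rule TrC_cong) (use assms(2) in simp)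
  then show ?thesis using chain_step[OF \<open>m < N\<close>] by metis
qed

lemma foldl_TrC_diff: "foldl (\<lambda>Y i. TrC (f i) i Y) (X - Z) l = foldl (\<lambda>Y i. TrC (f i) i Y) X l - foldl (\<lambda>Y i. TrC (f i) i Y) Z l"
  by (induction l arbitrary: X Z) (simp_all add: TrC_diff)

lemma chain_diff: "chain j m (X - Z) = chain j m X - chain j m Z"
  unfolding chain_def by (rule foldl_TrC_diff)

lemma chain_flag:
  assumes "\<And>i. Suc m \<le> i \<Longrightarrow> cf j i = cf j' i"
  shows "chain j m = chain j' m"
  unfolding chain_def using assms by (intro ext foldl_cong refl) auto

lemma chain_bound:
  assumes "m \<le> N"
  shows "\<forall>Y. psd (chi m) Y \<longrightarrow> Re (chain j m Y 0 0) \<le> (\<Sum>a<chi m. (Lam m a)^2 * Re (Y a a))"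
  using assms
proof (induction m rule: inc_induct)
  case base
  show ?case using chiN LamN by (simp add: chain_N)
next
  case (step n)
  show ?case
  proof (intro allI impI)
    fix Y assume psdY: "psd (chi n) Y"
    have i: "Suc n \<in> {1..N}" using step.hyps by auto
    let ?T = "TrC (cf j (Suc n)) (Suc n) Y"
    have psdT: "psd (chi (Suc n)) ?T" using TrC_psd[of "Suc n" Y] psdY by simp
    have "Re (chain j n Y 0 0) = Re (chain j (Suc n) ?T 0 0)"
      using chain_step[OF step.hyps(2)] by simp
    also have "\<dots> \<le> (\<Sum>b<chi (Suc n). (Lam (Suc n) b)^2 * Re (?T b b))"
      using step.IH psdT by blast
    also have "\<dots> = Re (\<Sum>b<chi (Suc n). complex_of_real ((Lam (Suc n) b)^2) * ?T b b)"
      by (simp add: Re_sum)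
    also have "\<dots> = Re (\<Sum>a<chi n. complex_of_real ((cf j (Suc n) a)^2) * Y a a)"
      using TrC_trace[OF i] by simp
    also have "\<dots> = (\<Sum>a<chi n. (cf j (Suc n) a)^2 * Re (Y a a))"
      by (simp add: Re_sum)
    also have "\<dots> \<le> (\<Sum>a<chi n. (Lam n a)^2 * Re (Y a a))"
    proof (intro sum_mono)
      fix a assume "a \<in> {..<chi n}"
      then have "0 \<le> Re (Y a a)" using psd_diag psdY by auto
      moreover have "(cf j (Suc n) a)^2 \<le> (Lam n a)^2" unfolding cf_def by simp
      ultimately show "(cf j (Suc n) a)^2 * Re (Y a a) \<le> (Lam n a)^2 * Re (Y a a)"
        by (rule mult_right_mono[rotated])
    qed
    finally show "Re (chain j n Y 0 0) \<le> (\<Sum>a<chi n. (Lam n a)^2 * Re (Y a a))" .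
  qed
qed


primrec lv :: "nat \<Rightarrow> nat \<Rightarrow> (nat \<Rightarrow> nat) \<Rightarrow> nat \<Rightarrow> complex" where
  "lv j 0 \<sigma> = (\<lambda>b. 1)"
| "lv j (Suc k) \<sigma> = (\<lambda>b. \<Sum>a<chi k. lv j k \<sigma> a * (complex_of_real (cf j (Suc k) a) * Gamma (Suc k) (\<sigma> (Suc k)) $$ (a,b)))"

lemma lv_local: "(\<forall>i\<in>{1..k}. \<sigma> i = \<sigma>' i) \<Longrightarrow> lv j k \<sigma> = lv j k \<sigma>'"
  by (induction k) auto

definition gram :: "nat \<Rightarrow> nat \<Rightarrow> nat \<Rightarrow> nat \<Rightarrow> complex" where
  "gram j k b d = (\<Sum>\<sigma>\<in>configs k. cnj (lv j k \<sigma> b) * lv j k \<sigma> d)"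

lemma gram_Suc: "gram j (Suc k) = TrC (cf j (Suc k)) (Suc k) (gram j k)"
proof (intro ext)
  fix b d
  let ?g = "\<lambda>s a b. complex_of_real (cf j (Suc k) a) * Gamma (Suc k) s $$ (a,b)"
  have lvS: "lv j (Suc k) (\<sigma>(Suc k := s)) b' = (\<Sum>a<chi k. lv j k \<sigma> a * ?g s a b')" for \<sigma> s b'
  proof -
    have "lv j k (\<sigma>(Suc k := s)) = lv j k \<sigma>" by (rule lv_local) auto
    then show ?thesis by simp
  qed
  have "gram j (Suc k) b d = (\<Sum>s<2. \<Sum>\<sigma>\<in>configs k. cnj (lv j (Suc k) (\<sigma>(Suc k := s)) b) * lv j (Suc k) (\<sigma>(Suc k := s)) d)"
    unfolding gram_def by (rule configs_Suc)
  also have "\<dots> = (\<Sum>s<2. \<Sum>\<sigma>\<in>configs k. \<Sum>a<chi k. \<Sum>e<chi k. cnj (lv j k \<sigma> a * ?g s a b) * (lv j k \<sigma> e * ?g s e d))"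
    unfolding lvS by (simp only: cnj_sum sum_product)
  also have "\<dots> = (\<Sum>s<2. \<Sum>a<chi k. \<Sum>e<chi k. \<Sum>\<sigma>\<in>configs k. cnj (lv j k \<sigma> a * ?g s a b) * (lv j k \<sigma> e * ?g s e d))"
    by (rule sum.cong[OF refl], rule swap3)
  also have "\<dots> = (\<Sum>s<2. \<Sum>a<chi k. \<Sum>e<chi k. \<Sum>\<sigma>\<in>configs k. cnj (?g s a b) * (cnj (lv j k \<sigma> a) * lv j k \<sigma> e) * ?g s e d)"
    by (intro sum.cong refl) (simp only: complex_cnj_mult mult_ac)
  also have "\<dots> = TrC (cf j (Suc k)) (Suc k) (gram j k) b d"
    unfolding TrC_def gram_def by (simp only: sum_distrib_left sum_distrib_right diff_Suc_1)
  finally show "gram j (Suc k) b d = TrC (cf j (Suc k)) (Suc k) (gram j k) b d" .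
qed

lemma gram_chain: "k \<le> N \<Longrightarrow> gram j N = chain j k (gram j k)"
proof (induction k rule: inc_induct)
  case base
  then show ?case by (simp add: chain_N)
next
  case (step n)
  then show ?case using chain_step[of n j "gram j n"] by (simp add: gram_Suc)
qed

lemma gram_0: "gram j 0 a c = 1"
  unfolding gram_def configs_0 by simp

lemma gram_id: "k \<le> j \<Longrightarrow> k \<le> N \<Longrightarrow> b < chi k \<Longrightarrow> d < chi k \<Longrightarrow> gram j k b d = (if b = d then 1 else 0)"
proof (induction k arbitrary: b d)
  case 0
  then show ?case using chi0 by (simp add: gram_0)
next
  case (Suc k)
  have i: "Suc k \<in> {1..N}" using Suc.prems by auto
  have "gram j (Suc k) b d = TrC (cf j (Suc k)) (Suc k) (gram j k) b d" by (simp add: gram_Suc)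
  also have "\<dots> = TrC (cf j (Suc k)) (Suc k) (\<lambda>a e. if a = e then 1 else 0) b d"
    using Suc by (subst TrC_cong[of "Suc k" "gram j k" "\<lambda>a e. if a = e then 1 else 0"]) auto
  also have "\<dots> = (\<Sum>s<2. \<Sum>a<chi (Suc k - 1). complex_of_real ((Lam (Suc k - 1) a)^2) * (cnj (Gamma (Suc k) s $$ (a,b)) * Gamma (Suc k) s $$ (a,d)))"
    unfolding TrC_Id using Suc.prems by (simp add: cf_def)
  also have "\<dots> = (if b = d then 1 else 0)"
    by (rule lcan[OF i]) (use Suc.prems in auto)
  finally show ?case .
qed

lemma psd_Id: "psd n (\<lambda>a e. if a = e then 1 else 0)"
  unfolding psd_def
proof
  fix v :: "nat \<Rightarrow> complex"
  have "(\<Sum>a<n. \<Sum>c<n. cnj (v a) * (if a = c then 1 else 0) * v c) = (\<Sum>a<n. cnj (v a) * v a)"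
  proof (rule sum.cong[OF refl])
    fix a assume "a \<in> {..<n}"
    have "(\<Sum>c<n. cnj (v a) * (if a = c then 1 else 0) * v c) = (\<Sum>c<n. if c = a then cnj (v a) * v a else 0)"
      by (rule sum.cong[OF refl]) auto
    then show "(\<Sum>c<n. cnj (v a) * (if a = c then 1 else 0) * v c) = cnj (v a) * v a"
      using \<open>a \<in> _\<close> by simp
  qed
  moreover have "0 \<le> Re (\<Sum>a<n. cnj (v a) * v a)"
    unfolding Re_sum by (intro sum_nonneg) (simp add: mult.commute[of "cnj _"] complex_mult_cnj)
  ultimately show "0 \<le> Re (\<Sum>a<n. \<Sum>c<n. cnj (v a) * (if a = c then 1 else 0) * v c)" by simp
qed

lemma psd_gram0: "psd (chi 0) (gram j 0)"
  using psd_Id[of 1] chi0 unfolding psd_def by (simp add: gram_0)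

definition nsq :: "nat \<Rightarrow> real" where "nsq j = Re (gram j N 0 0)"

lemma nsq_le1: "nsq j \<le> 1"
proof -
  have "nsq j = Re (chain j 0 (gram j 0) 0 0)" unfolding nsq_def using gram_chain[of 0 j] by simp
  also have "\<dots> \<le> (\<Sum>a<chi 0. (Lam 0 a)^2 * Re (gram j 0 a a))"
    using chain_bound[of 0 j] psd_gram0 by blast
  also have "\<dots> = 1" using chi0 Lam0 by (simp add: gram_0)
  finally show ?thesis .
qed

lemma nsq_step:
  assumes j: "1 \<le> j" "j < N"
  shows "nsq (Suc j) - nsq j \<le> eps_bond chi Lam chi' j"
proof -
  let ?I = "\<lambda>a e. if a = e then (1::complex) else 0"
  define A where "A = TrC (cf (Suc j) (Suc j)) (Suc j) ?I"
  define B where "B = TrC (cf j (Suc j)) (Suc j) ?I"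
  define c' where "c' a = (if chi' \<le> a then Lam j a else 0)" for a
  define C where "C = TrC c' (Suc j) ?I"
  have i: "Suc j \<in> {1..N}" using j by auto
  have flag: "chain j (Suc j) = chain (Suc j) (Suc j)"
    by (rule chain_flag) (auto simp: cf_def intro!: ext)
  have nj: "nsq j = Re (chain (Suc j) (Suc j) B 0 0)"
  proof -
    have "nsq j = Re (chain j j (gram j j) 0 0)" unfolding nsq_def using gram_chain[of j j] j by simp
    also have "chain j j (gram j j) 0 0 = chain j j ?I 0 0"
      by (rule chain_cong) (use j gram_id[of j j] in auto)
    also have "chain j j ?I = chain j (Suc j) B" unfolding B_def using chain_step j by simp
    finally show ?thesis using flag by simp
  qed
  have nSj: "nsq (Suc j) = Re (chain (Suc j) (Suc j) A 0 0)"
  proof -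
    have "nsq (Suc j) = Re (chain (Suc j) j (gram (Suc j) j) 0 0)" unfolding nsq_def using gram_chain[of j "Suc j"] j by simp
    also have "chain (Suc j) j (gram (Suc j) j) 0 0 = chain (Suc j) j ?I 0 0"
      by (rule chain_cong) (use j gram_id[of j "Suc j"] in auto)
    also have "chain (Suc j) j ?I = chain (Suc j) (Suc j) A" unfolding A_def using chain_step j by simp
    finally show ?thesis .
  qed
  have ABC: "A - B = C"
  proof (intro ext)
    fix b d
    have "(A - B) b d = (\<Sum>s<2. \<Sum>a<chi j. complex_of_real ((cf (Suc j) (Suc j) a)^2) * (cnj (Gamma (Suc j) s $$ (a,b)) * Gamma (Suc j) s $$ (a,d)))
         - (\<Sum>s<2. \<Sum>a<chi j. complex_of_real ((cf j (Suc j) a)^2) * (cnj (Gamma (Suc j) s $$ (a,b)) * Gamma (Suc j) s $$ (a,d)))"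
      unfolding A_def B_def by (simp only: fun_diff_def TrC_Id diff_Suc_1)
    also have "\<dots> = (\<Sum>s<2. \<Sum>a<chi j. complex_of_real ((c' a)^2) * (cnj (Gamma (Suc j) s $$ (a,b)) * Gamma (Suc j) s $$ (a,d)))"
      unfolding sum_subtractf[symmetric]
      by (intro sum.cong refl) (simp add: cf_def c'_def algebra_simps)
    also have "\<dots> = C b d" unfolding C_def TrC_Id by simp
    finally show "(A - B) b d = C b d" .
  qed
  have "nsq (Suc j) - nsq j = Re (chain (Suc j) (Suc j) A 0 0 - chain (Suc j) (Suc j) B 0 0)"
    using nj nSj by simp
  also have "\<dots> = Re (chain (Suc j) (Suc j) C 0 0)"
    using chain_diff[of "Suc j" "Suc j" A B] ABC by (simp add: fun_diff_def)
  also have "\<dots> \<le> (\<Sum>b<chi (Suc j). (Lam (Suc j) b)^2 * Re (C b b))"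
  proof -
    have "psd (chi (Suc j)) C" unfolding C_def using TrC_psd[of "Suc j" ?I c'] psd_Id by simp
    then show ?thesis using chain_bound[of "Suc j" "Suc j"] j by auto
  qed
  also have "\<dots> = Re (\<Sum>b<chi (Suc j). complex_of_real ((Lam (Suc j) b)^2) * C b b)"
    by (simp add: Re_sum)
  also have "\<dots> = Re (\<Sum>a<chi j. complex_of_real ((c' a)^2) * ?I a a)"
    unfolding C_def using TrC_trace[OF i, of c' ?I] by simp
  also have "\<dots> = (\<Sum>a<chi j. (c' a)^2)" by (simp add: Re_sum)
  also have "\<dots> = (\<Sum>a\<in>{a\<in>{..<chi j}. chi' \<le> a}. (Lam j a)^2)"
    by (subst sum.inter_filter) (auto simp: c'_def intro!: sum.cong)
  also have "{a\<in>{..<chi j}. chi' \<le> a} = {chi'..<chi j}" by auto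
  finally show ?thesis unfolding eps_bond_def .
qed

lemma nsq_tele: "k \<le> N \<Longrightarrow> 1 \<le> k \<longrightarrow> nsq N - (\<Sum>j\<in>{k..<N}. eps_bond chi Lam chi' j) \<le> nsq k"
proof (induction k rule: inc_induct)
  case base
  then show ?case by simp
next
  case (step n)
  have "(\<Sum>j\<in>{n..<N}. eps_bond chi Lam chi' j) = eps_bond chi Lam chi' n + (\<Sum>j\<in>{Suc n..<N}. eps_bond chi Lam chi' j)"
    using step.hyps by (simp add: sum.atLeast_Suc_lessThan)
  moreover have "1 \<le> n \<Longrightarrow> nsq (Suc n) - nsq n \<le> eps_bond chi Lam chi' n" using nsq_step step by auto
  ultimately show ?case using step.IH by auto
qed


lemma fold_lv:
  assumes F: "\<And>i. i \<in> {1..N} \<Longrightarrow> F i \<in> carrier_mat (chi (i-1)) (chi i)"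
    and Fe: "\<And>i a b. i \<in> {1..N} \<Longrightarrow> a < chi (i-1) \<Longrightarrow> b < chi i \<Longrightarrow>
       F i $$ (a,b) = complex_of_real (cf j i a) * Gamma i (\<sigma> i) $$ (a,b)"
  shows "k \<le> N \<Longrightarrow> foldl (*) (1\<^sub>m 1) (map F [1..<k+1]) \<in> carrier_mat 1 (chi k) \<and>
     (\<forall>b<chi k. foldl (*) (1\<^sub>m 1) (map F [1..<k+1]) $$ (0,b) = lv j k \<sigma> b)"
proof (induction k)
  case 0
  then show ?case using chi0 by auto
next
  case (Suc k)
  define M where "M = foldl (*) (1\<^sub>m 1) (map F [1..<k+1])"
  have IH: "M \<in> carrier_mat 1 (chi k)" "\<And>b. b < chi k \<Longrightarrow> M $$ (0,b) = lv j k \<sigma> b"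
    using Suc unfolding M_def by auto
  have i: "Suc k \<in> {1..N}" using Suc.prems by auto
  have FS: "F (Suc k) \<in> carrier_mat (chi k) (chi (Suc k))" using F[OF i] by simp
  have e: "foldl (*) (1\<^sub>m 1) (map F [1..<Suc k+1]) = M * F (Suc k)"
    unfolding M_def by simp
  have "M * F (Suc k) \<in> carrier_mat 1 (chi (Suc k))" using IH(1) FS by simp
  moreover have "(M * F (Suc k)) $$ (0,b) = lv j (Suc k) \<sigma> b" if b: "b < chi (Suc k)" for b
  proof -
    have "(M * F (Suc k)) $$ (0,b) = (\<Sum>a<chi k. M $$ (0,a) * F (Suc k) $$ (a,b))"
      by (rule mult_entry[OF IH(1) FS]) (use b in auto)
    also have "\<dots> = lv j (Suc k) \<sigma> b"
      using IH(2) Fe[OF i _ b] by simp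
    finally show ?thesis .
  qed
  ultimately show ?case using e by simp
qed

lemma amp_lv:
  assumes F: "\<And>i. i \<in> {1..N} \<Longrightarrow> F i \<in> carrier_mat (chi (i-1)) (chi i)"
    and Fe: "\<And>i a b. i \<in> {1..N} \<Longrightarrow> a < chi (i-1) \<Longrightarrow> b < chi i \<Longrightarrow>
       F i $$ (a,b) = complex_of_real (cf j i a) * Gamma i (\<sigma> i) $$ (a,b)"
  shows "mtrace (foldl (*) (1\<^sub>m 1) (map F [1..<N+1]) * lam_mat chi Lam N) = lv j N \<sigma> 0"
proof -
  have f: "foldl (*) (1\<^sub>m 1) (map F [1..<N+1]) \<in> carrier_mat 1 1"
     "foldl (*) (1\<^sub>m 1) (map F [1..<N+1]) $$ (0,0) = lv j N \<sigma> 0"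
    using fold_lv[OF F Fe, of N] chiN by auto
  have l: "lam_mat chi Lam N \<in> carrier_mat 1 1" "lam_mat chi Lam N $$ (0,0) = 1"
    using lam_carrier[of chi Lam N] lam_entry[of 0 chi N 0 Lam] chiN LamN by auto
  show ?thesis using mtrace_11[OF f(1) l(1)] f(2) l(2) by simp
qed

lemma norm_nsq:
  assumes "\<And>\<sigma>. \<sigma> \<in> configs N \<Longrightarrow> amp \<sigma> = lv j N \<sigma> 0"
  shows "(\<Sum>\<sigma>\<in>configs N. (cmod (amp \<sigma>))^2) = nsq j"
proof -
  have "nsq j = (\<Sum>\<sigma>\<in>configs N. Re (cnj (lv j N \<sigma> 0) * lv j N \<sigma> 0))"
    unfolding nsq_def gram_def by (simp add: Re_sum)
  also have "\<dots> = (\<Sum>\<sigma>\<in>configs N. (cmod (amp \<sigma>))^2)"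
  proof (intro sum.cong refl)
    fix \<sigma> assume "\<sigma> \<in> configs N"
    then have "amp \<sigma> = lv j N \<sigma> 0" by (rule assms)
    moreover have "Re (cnj z * z) = (cmod z)^2" for z
      by (metis Re_complex_of_real complex_norm_square mult.commute)
    ultimately show "Re (cnj (lv j N \<sigma> 0) * lv j N \<sigma> 0) = (cmod (amp \<sigma>))^2" by simp
  qed
  finally show ?thesis by simp
qed

lemma nsq_nonneg: "0 \<le> nsq j"
proof -
  have "nsq j = (\<Sum>\<sigma>\<in>configs N. (cmod (lv j N \<sigma> 0))^2)" by (rule norm_nsq[symmetric]) simp
  then show ?thesis by (simp add: sum_nonneg)
qed

lemma configs_lt2: "\<sigma> \<in> configs N \<Longrightarrow> i \<in> {1..N} \<Longrightarrow> \<sigma> i < 2"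
  unfolding configs_def by (auto simp: PiE_iff)

lemma comp_nsq: "(\<Sum>\<sigma>\<in>configs N. (cmod (comp_amp N chi Gamma Lam chi' \<sigma>))^2) = nsq 1"
proof (rule norm_nsq)
  fix \<sigma> assume s: "\<sigma> \<in> configs N"
  define Q where "Q i = (if i = 1 then 1\<^sub>m (chi 0) else proj_mat chi chi' (i - 1))" for i
  define q :: "nat \<Rightarrow> nat \<Rightarrow> real" where "q i a = (if i = 1 then 1 else (if a < chi' then 1 else 0))" for i a :: nat
  have QC: "Q i \<in> carrier_mat (chi (i-1)) (chi (i-1))" for i
    unfolding Q_def using proj_carrier[of chi chi' "i-1"] by auto
  have Qe: "Q i $$ (a,a') = (if a = a' then complex_of_real (q i a) else 0)" if "a < chi (i-1)" "a' < chi (i-1)" for i a a'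
    unfolding Q_def q_def using that proj_entry[of a chi "i-1" a' chi'] by auto
  have G: "Gamma i (\<sigma> i) \<in> carrier_mat (chi (i-1)) (chi i)" if "i \<in> {1..N}" for i
    using carr[OF that configs_lt2[OF s that]] .
  have QL: "Q i * lam_mat chi Lam (i-1) \<in> carrier_mat (chi (i-1)) (chi (i-1))" for i
    using QC lam_carrier by (metis mult_carrier_mat)
  have QLe: "(Q i * lam_mat chi Lam (i-1)) $$ (a,a') = (if a = a' then complex_of_real (q i a * Lam (i-1) a) else 0)"
    if "a < chi (i-1)" "a' < chi (i-1)" for i a a'
  proof -
    have "(Q i * lam_mat chi Lam (i-1)) $$ (a,a') = complex_of_real (q i a) * lam_mat chi Lam (i-1) $$ (a,a')"
      by (rule diag_mult_left[where f="\<lambda>a. complex_of_real (q i a)"]) (use QC Qe lam_carrier that in auto)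
    then show ?thesis using lam_entry[of a chi "i-1" a' Lam] that by simp
  qed
  show "comp_amp N chi Gamma Lam chi' \<sigma> = lv 1 N \<sigma> 0"
    unfolding comp_amp_def Q_def[symmetric]
  proof (rule amp_lv)
    fix i assume i: "i \<in> {1..N}"
    show "Q i * lam_mat chi Lam (i - 1) * Gamma i (\<sigma> i) \<in> carrier_mat (chi (i - 1)) (chi i)"
      using QL G[OF i] by (metis mult_carrier_mat)
  next
    fix i a b assume i: "i \<in> {1..N}" and a: "a < chi (i-1)" and b: "b < chi i"
    have "(Q i * lam_mat chi Lam (i - 1) * Gamma i (\<sigma> i)) $$ (a,b) = complex_of_real (q i a * Lam (i-1) a) * Gamma i (\<sigma> i) $$ (a,b)"
      by (rule diag_mult_left[where f="\<lambda>a. complex_of_real (q i a * Lam (i-1) a)"]) (use QL QLe G i a b in auto)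
    also have "q i a * Lam (i-1) a = cf 1 i a" unfolding q_def cf_def using i by auto
    finally show "(Q i * lam_mat chi Lam (i - 1) * Gamma i (\<sigma> i)) $$ (a,b) = complex_of_real (cf 1 i a) * Gamma i (\<sigma> i) $$ (a,b)" .
  qed
qed

lemma mps_nsq: "(\<Sum>\<sigma>\<in>configs N. (cmod (mps_amp N chi Gamma Lam \<sigma>))^2) = nsq N"
proof (rule norm_nsq)
  fix \<sigma> assume s: "\<sigma> \<in> configs N"
  have G: "Gamma i (\<sigma> i) \<in> carrier_mat (chi (i-1)) (chi i)" if "i \<in> {1..N}" for i
    using carr[OF that configs_lt2[OF s that]] .
  show "mps_amp N chi Gamma Lam \<sigma> = lv N N \<sigma> 0"
    unfolding mps_amp_def
  proof (rule amp_lv)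
    fix i assume i: "i \<in> {1..N}"
    show "lam_mat chi Lam (i - 1) * Gamma i (\<sigma> i) \<in> carrier_mat (chi (i - 1)) (chi i)"
      using lam_carrier G[OF i] by (metis mult_carrier_mat)
  next
    fix i a b assume i: "i \<in> {1..N}" and a: "a < chi (i-1)" and b: "b < chi i"
    have "(lam_mat chi Lam (i - 1) * Gamma i (\<sigma> i)) $$ (a,b) = complex_of_real (Lam (i-1) a) * Gamma i (\<sigma> i) $$ (a,b)"
      by (rule diag_mult_left[where f="\<lambda>a. complex_of_real (Lam (i-1) a)"]) (use lam_carrier lam_entry G i a b in auto)
    also have "Lam (i-1) a = cf N i a" unfolding cf_def using i by auto
    finally show "(lam_mat chi Lam (i - 1) * Gamma i (\<sigma> i)) $$ (a,b) = complex_of_real (cf N i a) * Gamma i (\<sigma> i) $$ (a,b)" .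
  qed
qed

end

theorem lemma2:
  fixes N chi' :: nat and chi :: "nat \<Rightarrow> nat"
    and Gamma :: "nat \<Rightarrow> nat \<Rightarrow> complex mat" and Lam :: "nat \<Rightarrow> nat \<Rightarrow> real"
  assumes "N \<ge> 1"
    and "vidal_mps N chi Gamma Lam"
    and "canonical N chi Gamma Lam"
    and "state_norm N (mps_amp N chi Gamma Lam) = 1"
    and "(\<forall>i\<le>N. (\<Sum>a<chi i. (Lam i a)\<^sup>2) = 1)"
    and "chi' \<ge> 1"
  shows "1 - sqrt (2 * eps_total N chi Lam chi') \<le> state_norm N (comp_amp N chi Gamma Lam chi')
       \<and> state_norm N (comp_amp N chi Gamma Lam chi') \<le> 1"
proof -
  interpret L: mpsL N chi' chi Gamma Lam
  proof
    show "1 \<le> N" using assms(1) .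
    show "chi 0 = 1" "chi N = 1" "Lam N 0 = 1" "Lam 0 0 = 1"
      using assms(2) unfolding vidal_mps_def by auto
    show "\<And>i s. i \<in> {1..N} \<Longrightarrow> s < 2 \<Longrightarrow> Gamma i s \<in> carrier_mat (chi (i - 1)) (chi i)"
      using assms(2) unfolding vidal_mps_def by auto
    show "\<And>i a c. i \<in> {1..N} \<Longrightarrow> a < chi (i-1) \<Longrightarrow> c < chi (i-1) \<Longrightarrow>
     (\<Sum>s<2. \<Sum>b<chi i. complex_of_real ((Lam i b)^2) * (Gamma i s $$ (a,b) * cnj (Gamma i s $$ (c,b))))
       = (if a = c then 1 else 0)"
      by (rule rcan_of[OF assms(2,3)])
    show "\<And>i b d. i \<in> {1..N} \<Longrightarrow> b < chi i \<Longrightarrow> d < chi i \<Longrightarrow>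
     (\<Sum>s<2. \<Sum>a<chi (i-1). complex_of_real ((Lam (i-1) a)^2) * (cnj (Gamma i s $$ (a,b)) * Gamma i s $$ (a,d)))
       = (if b = d then 1 else 0)"
      by (rule lcan_of[OF assms(2,3)])
  qed
  have nN: "L.nsq N = 1"
    using assms(4) L.mps_nsq unfolding state_norm_def by simp
  have sn: "state_norm N (comp_amp N chi Gamma Lam chi') = sqrt (L.nsq 1)"
    unfolding state_norm_def L.comp_nsq ..
  have lo: "1 - eps_total N chi Lam chi' \<le> L.nsq 1"
    using L.nsq_tele[of 1] assms(1) nN unfolding eps_total_def by simp
  have e0: "0 \<le> eps_total N chi Lam chi'"
    unfolding eps_total_def eps_bond_def by (intro sum_nonneg) simp
  show ?thesis unfolding sn
    by (rule final_real[OF lo L.nsq_nonneg L.nsq_le1 e0])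
qed

end
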